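(* Let $P$ be a classifier on $\mathbb{R}^n$ that is non-trivial, i.e. its label set $L_P$ has more than one element. Then $P$ has infinite pointwise coverage if and only if $P$ is a refined linear classifier.
   Context: A classifier is a partition $P$ of $\mathbb{R}^n$ together with a distinguished member $R \in P$, the refinement set, which may be empty and which is both meagre and Lebesgue null. The label set is $L_P = P \setminus \{R\}$ and the feature space is $\bigcup L_P$. For $x \in \mathbb{R}^n$, $P(x)$ denotes the member of $P$ containing $x$. The classifier is trivial if $L_P$ is a singleton, and non-trivial otherwise. An anchor for a point $x$ is an open ball $A = B(c,r)$ (center $c$, radius $r>0$) with $x \in A \subseteq P(x)$; its coverage is its radius $r$. The coverage of $P$ at $x$ is $C_P(x) = \sup\{ r : B(c,r) \text{ is an anchor for } x\}$, taken to be $0$ if $x$ has no anchor and $\infty$ if there are anchors for $x$ of arbitrarily large radius. $P$ has infinite pointwise coverage if $\inf\{C_P(x) : x \in \bigcup L_P\} = \infty$, i.e. $C_P(x) = \infty$ for every $x$ in the feature space. A refined linear classifier is a classifier of the form $P = \{M, N, R\}$ with $L_P = \{M, N\}$, where $R$ is an affine hyperplane in $\mathbb{R}^n$ and $M, N$ are the two open halfspaces on either side of $R$. *)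

theory Defs
  imports "HOL-Analysis.Analysis"
begin

definition nowhere_dense :: "'a::topological_space set \<Rightarrow> bool" where
  "nowhere_dense S \<longleftrightarrow> interior (closure S) = {}"

definition meagre :: "'a::topological_space set \<Rightarrow> bool" where
  "meagre S \<longleftrightarrow> (\<exists>F. countable F \<and> (\<forall>T\<in>F. nowhere_dense T) \<and> S \<subseteq> \<Union>F)"

definition classifier :: "'a::euclidean_space set set \<Rightarrow> 'a set \<Rightarrow> bool" where
  "classifier P R \<longleftrightarrow>
     \<Union>P = UNIV \<and>
     (\<forall>A\<in>P. \<forall>B\<in>P. A \<noteq> B \<longrightarrow> A \<inter> B = {}) \<and>
     (\<forall>A\<in>P. A \<noteq> R \<longrightarrow> A \<noteq> {}) \<and>
     R \<in> P \<and> meagre R \<and> R \<in> null_sets lebesgue"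

definition labels :: "'a set set \<Rightarrow> 'a set \<Rightarrow> 'a set set" where
  "labels P R = P - {R}"

definition nontrivial_classifier :: "'a set set \<Rightarrow> 'a set \<Rightarrow> bool" where
  "nontrivial_classifier P R \<longleftrightarrow> \<not> (\<exists>A. labels P R = {A})"

definition cell :: "'a set set \<Rightarrow> 'a \<Rightarrow> 'a set" where
  "cell P x = (THE A. A \<in> P \<and> x \<in> A)"

definition anchor :: "'a::metric_space set set \<Rightarrow> 'a \<Rightarrow> 'a \<Rightarrow> real \<Rightarrow> bool" where
  "anchor P x c r \<longleftrightarrow> r > 0 \<and> x \<in> ball c r \<and> ball c r \<subseteq> cell P x"

definition coverage :: "'a::metric_space set set \<Rightarrow> 'a \<Rightarrow> ereal" where
  "coverage P x =
     (if \<exists>c r. anchor P x c r then Sup {ereal r | c r. anchor P x c r} else 0)"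

definition infinite_pointwise_coverage :: "'a::metric_space set set \<Rightarrow> 'a set \<Rightarrow> bool" where
  "infinite_pointwise_coverage P R \<longleftrightarrow>
     (INF x\<in>\<Union>(labels P R). coverage P x) = \<infinity>"

definition refined_linear_classifier :: "'a::euclidean_space set set \<Rightarrow> 'a set \<Rightarrow> bool" where
  "refined_linear_classifier P R \<longleftrightarrow>
     (\<exists>a b. a \<noteq> 0 \<and> R = {x. a \<bullet> x = b} \<and>
        labels P R = {{x. a \<bullet> x < b}, {x. a \<bullet> x > b}} \<and>
        P = {{x. a \<bullet> x < b}, {x. a \<bullet> x > b}, R})"

end

theory Submission imports Defs begin

lemma halfspace_ball:
  fixes a x :: "'a::euclidean_space"
  assumes "a \<noteq> 0" "a \<bullet> x < b" "K > 0"
  shows "\<exists>c r. r > K \<and> x \<in> ball c r \<and> ball c r \<subseteq> {y. a \<bullet> y < b}"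
proof -
  define u where "u = a /\<^sub>R norm a"
  define \<delta> where "\<delta> = (b - a \<bullet> x) / norm a"
  have na: "norm a > 0" using assms by simp
  have dpos: "\<delta> > 0" using assms na by (simp add: \<delta>_def)
  define c where "c = x - K *\<^sub>R u"
  define r where "r = K + \<delta>/2"
  have ac: "a \<bullet> c = a \<bullet> x - K * norm a"
    using na by (simp add: c_def u_def inner_diff_right power2_norm_eq_inner[symmetric] power2_eq_square)
  have "r > K" using dpos by (simp add: r_def)
  moreover have "x \<in> ball c r" using dpos assms na
    by (simp add: c_def r_def u_def dist_norm field_simps)
  moreover have "ball c r \<subseteq> {y. a \<bullet> y < b}"
  proof
    fix y assume "y \<in> ball c r"
    hence dy: "norm (y - c) < r" by (simp add: dist_norm norm_minus_commute)
    have "a \<bullet> y = a \<bullet> c + a \<bullet> (y - c)" by (simp add: inner_diff_right)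
    also have "\<dots> \<le> a \<bullet> c + norm a * norm (y - c)" using norm_cauchy_schwarz by simp
    also have "\<dots> < a \<bullet> c + norm a * r" using dy na by simp
    also have "\<dots> = a \<bullet> x + (b - a \<bullet> x) / 2"
      using na by (simp add: ac r_def \<delta>_def field_simps)
    also have "\<dots> < b" using assms by (simp add: field_simps)
    finally show "y \<in> {y. a \<bullet> y < b}" by simp
  qed
  ultimately show ?thesis by blast
qed

lemma half_disjoint:
  fixes u v :: "'a::euclidean_space"
  assumes "norm u = 1" "norm v = 1" "\<And>y. \<not> (u \<bullet> y > p \<and> v \<bullet> y > q)"
  shows "v = - u"
proof (rule ccontr)
  assume "v \<noteq> - u"
  hence nz: "u + v \<noteq> 0" by (metis add.commute add_eq_0_iff)
  define s where "s = (u + v) \<bullet> (u + v)"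
  have spos: "s > 0" using nz by (simp add: s_def)
  have uu: "u \<bullet> u = 1" "v \<bullet> v = 1" using assms by (simp_all add: norm_eq_1)
  have us: "u \<bullet> (u + v) = s / 2" "v \<bullet> (u + v) = s / 2"
    using uu by (auto simp: s_def inner_add_left inner_add_right inner_commute)
  define t where "t = 2 * (\<bar>p\<bar> + \<bar>q\<bar> + 1) / s"
  have "t * (s/2) = \<bar>p\<bar> + \<bar>q\<bar> + 1" using spos by (simp add: t_def)
  moreover have "u \<bullet> (t *\<^sub>R (u + v)) = t * (s/2)" "v \<bullet> (t *\<^sub>R (u + v)) = t * (s/2)"
    using us by simp_all
  ultimately have "u \<bullet> (t *\<^sub>R (u + v)) > p \<and> v \<bullet> (t *\<^sub>R (u + v)) > q"
    by linarith
  thus False using assms(3) by blast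
qed

lemma ball_not_null:
  assumes "e > 0" "ball c e \<subseteq> R" "R \<in> null_sets lebesgue"
  shows False
proof -
  have "negligible R" using assms negligible_iff_null_sets by blast
  hence "negligible (ball c e)" using assms negligible_subset by blast
  thus False using open_not_negligible[of "ball c e"] assms by auto
qed

lemma big_balls_halfspace:
  fixes L :: "'a::euclidean_space set"
  assumes w: "w \<notin> L" and x: "x \<in> L"
    and big: "\<And>K. \<exists>c r. r > K \<and> x \<in> ball c r \<and> ball c r \<subseteq> L"
  shows "\<exists>u. norm u = 1 \<and> {y. u \<bullet> y > u \<bullet> x} \<subseteq> L"
proof -
  have "\<forall>k::nat. \<exists>c r. r > real k + 1 + dist w x \<and> x \<in> ball c r \<and> ball c r \<subseteq> L"
    using big by blast
  then obtain c r where cr: "\<And>k::nat. r k > real k + 1 + dist w x \<and> x \<in> ball (c k) (r k) \<and> ball (c k) (r k) \<subseteq> L"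
    by metis
  define d where "d k = dist x (c k)" for k
  have dgt: "d k > real k + 1" for k
  proof -
    have "dist w (c k) \<ge> r k" using cr[of k] w by (metis mem_ball not_le subsetD dist_commute)
    moreover have "dist w (c k) \<le> dist w x + dist x (c k)" by (rule dist_triangle)
    ultimately show ?thesis using cr[of k] by (simp add: d_def)
  qed
  have dlt: "d k < r k" for k using cr[of k] by (simp add: d_def dist_commute)
  define v where "v k = (c k - x) /\<^sub>R d k" for k
  have nv: "norm (v k) = 1" for k
  proof -
    have "norm (c k - x) = d k" by (simp add: d_def dist_norm norm_minus_commute)
    thus ?thesis using dgt[of k] by (simp add: v_def)
  qed
  have cx: "c k - x = d k *\<^sub>R v k" for k using dgt[of k] by (simp add: v_def)
  have "\<forall>n. v n \<in> sphere (0::'a) 1" using nv by simp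
  then obtain u \<sigma> where u: "u \<in> sphere (0::'a) 1" and sm: "strict_mono \<sigma>" and lim: "(v \<circ> \<sigma>) \<longlonglongrightarrow> u"
    using compact_sphere[of "0::'a" 1] unfolding compact_def by metis
  have nu: "norm u = 1" using u by simp
  show ?thesis
  proof (intro exI conjI subsetI)
    show "norm u = 1" by (rule nu)
    fix y assume "y \<in> {y. u \<bullet> y > u \<bullet> x}"
    hence dpos: "u \<bullet> (y - x) > 0" by (simp add: inner_diff_right)
    define \<delta> where "\<delta> = u \<bullet> (y - x)"
    have "(\<lambda>k. (v \<circ> \<sigma>) k \<bullet> (y - x)) \<longlonglongrightarrow> u \<bullet> (y - x)"
      by (intro tendsto_intros lim)
    hence "eventually (\<lambda>k. (v \<circ> \<sigma>) k \<bullet> (y - x) > \<delta> / 2) sequentially"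
      using dpos by (intro order_tendstoD(1)) (auto simp: \<delta>_def)
    then obtain N1 where N1: "\<And>k. k \<ge> N1 \<Longrightarrow> v (\<sigma> k) \<bullet> (y - x) > \<delta> / 2"
      by (auto simp: eventually_sequentially)
    define k where "k = max N1 (nat \<lceil>norm (y - x) ^ 2 / \<delta>\<rceil>)"
    have vk: "v (\<sigma> k) \<bullet> (y - x) > \<delta> / 2" using N1 by (simp add: k_def)
    have "\<sigma> k \<ge> k" using sm by (rule seq_suble)
    hence "d (\<sigma> k) > real k" using dgt[of "\<sigma> k"] by linarith
    moreover have "real k \<ge> norm (y - x) ^ 2 / \<delta>" unfolding k_def
      by (metis le_max_iff_disj of_nat_le_iff real_nat_ceiling_ge order_trans of_nat_max max.cobounded2)
    ultimately have "norm (y - x) ^ 2 / \<delta> < d (\<sigma> k)" by linarith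
    hence Dbig: "d (\<sigma> k) * \<delta> > norm (y - x) ^ 2"
      using dpos by (simp add: \<delta>_def pos_divide_less_eq)
    define D where "D = d (\<sigma> k)"
    define V where "V = v (\<sigma> k)"
    have Dpos: "D > 0" using dgt[of "\<sigma> k"] by (simp add: D_def)
    have VV: "V \<bullet> V = 1" using nv by (simp add: V_def norm_eq_1)
    have yc: "y - c (\<sigma> k) = (y - x) - D *\<^sub>R V" using cx[of "\<sigma> k"] by (simp add: D_def V_def algebra_simps)
    have "norm (y - c (\<sigma> k)) ^ 2 = (y - x) \<bullet> (y - x) - 2 * D * (V \<bullet> (y - x)) + D ^ 2 * (V \<bullet> V)"
      unfolding yc power2_norm_eq_inner
      by (simp add: inner_diff_left inner_diff_right inner_commute power2_eq_square algebra_simps)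
    also have "\<dots> < D ^ 2"
    proof -
      have "2 * D * (V \<bullet> (y - x)) > D * \<delta>" using vk Dpos by (simp add: V_def)
      moreover have "(y - x) \<bullet> (y - x) = norm (y - x) ^ 2" by (simp add: power2_norm_eq_inner)
      ultimately show ?thesis using VV Dbig by (simp add: D_def)
    qed
    finally have "norm (y - c (\<sigma> k)) < D"
      using Dpos by (meson abs_less_iff abs_norm_cancel power2_less_imp_less less_le)
    hence "y \<in> ball (c (\<sigma> k)) (r (\<sigma> k))"
      using dlt[of "\<sigma> k"] by (simp add: D_def dist_norm norm_minus_commute)
    thus "y \<in> L" using cr by blast
  qed
qed

lemma classifierD: fixes P :: "'a::euclidean_space set set" assumes "classifier P R"
  shows "\<Union>P = UNIV" "\<forall>A\<in>P. \<forall>B\<in>P. A \<noteq> B \<longrightarrow> A \<inter> B = {}" "\<forall>A\<in>P. A \<noteq> R \<longrightarrow> A \<noteq> {}" "R \<in> P" "R \<in> null_sets lebesgue"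
  using assms unfolding classifier_def by simp_all

lemma cell_eq:
  assumes "classifier P R" "A \<in> P" "x \<in> A"
  shows "cell P x = A"
  unfolding cell_def
proof (rule the_equality)
  show "A \<in> P \<and> x \<in> A" using assms by simp
  fix B assume "B \<in> P \<and> x \<in> B"
  thus "B = A" using assms unfolding classifier_def by blast
qed

lemma ereal_below_top:
  assumes "(z::ereal) < top"
  shows "\<exists>K::real. K > 0 \<and> z < ereal K"
proof (cases z)
  case (real t) thus ?thesis by (intro exI[of _ "max t 0 + 1"]) auto
next
  case PInf thus ?thesis using assms by simp
next
  case MInf thus ?thesis by (intro exI[of _ 1]) auto
qed

lemma coverage_top:
  assumes "\<And>K. K > 0 \<Longrightarrow> \<exists>c r. r > K \<and> anchor P x c r"
  shows "coverage P x = top"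
proof -
  have ex: "\<exists>c r. anchor P x c r" using assms[of 1] by auto
  have "Sup {ereal r | c r. anchor P x c r} = top"
    unfolding Sup_eq_top_iff
  proof (intro allI impI)
    fix z :: ereal assume "z < top"
    then obtain K where K: "K > 0" "z < ereal K" using ereal_below_top by blast
    then obtain c r where "r > K" "anchor P x c r" using assms by blast
    moreover have "ereal K < ereal r" using \<open>r > K\<close> by simp
    hence "z < ereal r" using K(2) by (meson less_trans)
    ultimately show "\<exists>i\<in>{ereal r | c r. anchor P x c r}. z < i" by blast
  qed
  thus ?thesis using ex by (simp add: coverage_def)
qed

lemma coverage_topD:
  assumes "coverage P x = top" "K > 0"
  shows "\<exists>c r. r > K \<and> anchor P x c r"
proof -
  have ex: "\<exists>c r. anchor P x c r"
    using assms(1) by (auto simp: coverage_def top_ereal_def split: if_splits)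
  hence "Sup {ereal r | c r. anchor P x c r} = top" using assms(1) by (simp add: coverage_def)
  moreover have "ereal K < top" by (simp add: top_ereal_def)
  ultimately have "\<exists>i\<in>{ereal r | c r. anchor P x c r}. ereal K < i" unfolding Sup_eq_top_iff by blast
  thus ?thesis by fastforce
qed

theorem theorem1:
  fixes P :: "'a::euclidean_space set set" and R :: "'a set"
  assumes "classifier P R"
    and "nontrivial_classifier P R"
  shows "infinite_pointwise_coverage P R \<longleftrightarrow> refined_linear_classifier P R"
proof -
  note CD = classifierD[OF assms(1)]
  have cU: "\<Union>P = UNIV" using CD(1) .
  have disj: "\<And>A B. A\<in>P \<Longrightarrow> B\<in>P \<Longrightarrow> A\<noteq>B \<Longrightarrow> A\<inter>B={}" using CD(2) by blast
  have ne: "\<And>A. A\<in>P \<Longrightarrow> A\<noteq>R \<Longrightarrow> A\<noteq>{}" using CD(3) by blast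
  have RP: "R\<in>P" using CD(4) .
  have Rnull: "R \<in> null_sets lebesgue" using CD(5) .
  have lab: "labels P R = P - {R}" by (simp add: labels_def)
  show ?thesis
  proof
    assume ipc: "infinite_pointwise_coverage P R"
    have "(INF x\<in>\<Union>(labels P R). coverage P x) = top"
      using ipc by (simp add: infinite_pointwise_coverage_def top_ereal_def)
    hence cov: "coverage P x = top" if "x \<in> \<Union>(labels P R)" for x
      using that by (simp only: INF_top_conv)
    have big: "\<exists>c r. r > K \<and> x \<in> ball c r \<and> ball c r \<subseteq> L"
      if L: "L \<in> labels P R" "x \<in> L" for L x K
    proof -
      obtain c r where cr: "r > max K 1" "anchor P x c r"
      proof -
        have "x \<in> \<Union>(labels P R)" using L by blast
        hence "\<exists>c r. r > max K 1 \<and> anchor P x c r" using coverage_topD[OF cov, of x "max K 1"] by simp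
        thus ?thesis using that by blast
      qed
      have "cell P x = L" using cell_eq[OF assms(1), of L x] L lab by blast
      thus ?thesis using cr unfolding anchor_def by (intro exI[of _ c] exI[of _ r]) auto
    qed
    have labs_ne: "labels P R \<noteq> {}"
    proof
      assume "labels P R = {}"
      hence "P \<subseteq> {R}" using lab by blast
      hence "ball (0::'a) 1 \<subseteq> R" using cU by blast
      thus False using ball_not_null[of 1 0 R] Rnull by simp
    qed
    obtain M where M: "M \<in> labels P R" using labs_ne by blast
    obtain N where N: "N \<in> labels P R" and MN: "M \<noteq> N"
      using assms(2) M unfolding nontrivial_classifier_def by blast
    have ldisj: "\<And>A B. A \<in> labels P R \<Longrightarrow> B \<in> labels P R \<Longrightarrow> A \<noteq> B \<Longrightarrow> A \<inter> B = {}"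
      using disj lab by blast
    have lne: "\<And>A. A \<in> labels P R \<Longrightarrow> A \<noteq> {}" using ne lab by blast
    have hs: "\<exists>u. norm u = 1 \<and> {y. u \<bullet> y > u \<bullet> x} \<subseteq> L"
      if L: "L \<in> labels P R" "x \<in> L" for L x
    proof -
      obtain L' where L': "L' \<in> labels P R" "L' \<noteq> L" using M N MN by metis
      then obtain w where "w \<in> L'" using lne by blast
      hence "w \<notin> L" using ldisj[OF L(1) L'(1)] L' by blast
      thus ?thesis using big_balls_halfspace[of w L x] big[OF L(1)] L(2) by blast
    qed
    obtain x0 u where x0: "x0 \<in> M" and nu: "norm u = 1" and HM: "{y. u \<bullet> y > u \<bullet> x0} \<subseteq> M"
      using hs[OF M] lne[OF M] by blast
    obtain z0 v where z0: "z0 \<in> N" and nv: "norm v = 1" and HN: "{y. v \<bullet> y > v \<bullet> z0} \<subseteq> N"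
      using hs[OF N] lne[OF N] by blast
    have MNd: "M \<inter> N = {}" using ldisj[OF M N MN] .
    have vu: "v = - u"
      by (rule half_disjoint[OF nu nv, of "u \<bullet> x0" "v \<bullet> z0"]) (use HM HN MNd in blast)
    have HN': "{y. u \<bullet> y < u \<bullet> z0} \<subseteq> N" using HN vu by simp
    have dirM: "{y. u \<bullet> y > u \<bullet> x} \<subseteq> M" if xM: "x \<in> M" for x
    proof -
      obtain q where nq: "norm q = 1" and Hq: "{y. q \<bullet> y > q \<bullet> x} \<subseteq> M" using hs[OF M xM] by blast
      have nmu: "norm (-u) = 1" using nu by simp
      have "-u = -q"
        by (rule half_disjoint[OF nq nmu, of "q \<bullet> x" "(-u) \<bullet> z0"]) (use Hq HN' MNd in auto)
      thus ?thesis using Hq by simp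
    qed
    have dirN: "{y. u \<bullet> y < u \<bullet> z} \<subseteq> N" if zN: "z \<in> N" for z
    proof -
      obtain q where nq: "norm q = 1" and Hq: "{y. q \<bullet> y > q \<bullet> z} \<subseteq> N" using hs[OF N zN] by blast
      have "q = -u"
        by (rule half_disjoint[OF nu nq, of "u \<bullet> x0" "q \<bullet> z"]) (use Hq HM MNd in blast)
      thus ?thesis using Hq by simp
    qed
    have labs: "labels P R = {M, N}"
    proof (rule ccontr)
      assume "labels P R \<noteq> {M, N}"
      then obtain L where L: "L \<in> labels P R" "L \<noteq> M" "L \<noteq> N" using M N by blast
      obtain w where w: "w \<in> L" using lne[OF L(1)] by blast
      obtain q where nq: "norm q = 1" and Hq: "{y. q \<bullet> y > q \<bullet> w} \<subseteq> L" using hs[OF L(1) w] by blast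
      have LM: "L \<inter> M = {}" "L \<inter> N = {}" using ldisj L M N by auto
      have "q = -u"
        by (rule half_disjoint[OF nu nq, of "u \<bullet> x0" "q \<bullet> w"]) (use Hq HM LM in blast)
      moreover have nmu: "norm (-u) = 1" using nu by simp
      have "-u = -q"
        by (rule half_disjoint[OF nq nmu, of "q \<bullet> w" "(-u) \<bullet> z0"]) (use Hq HN' LM in auto)
      ultimately have "-u = u" by (metis minus_minus)
      moreover have "u \<bullet> u = 1" using nu by (simp add: norm_eq_1)
      ultimately have "u \<bullet> u = 1" "(-u) \<bullet> u = 1" by simp_all
      thus False by simp
    qed
    have ord: "u \<bullet> z \<le> u \<bullet> x" if "x \<in> M" "z \<in> N" for x z
    proof (rule ccontr)
      assume nt: "\<not> ?thesis"
      define m where "m = ((u \<bullet> x + u \<bullet> z) / 2) *\<^sub>R u"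
      have uu: "u \<bullet> u = 1" using nu by (simp add: norm_eq_1)
      have "u \<bullet> m = (u \<bullet> x + u \<bullet> z) / 2" using uu by (simp add: m_def)
      hence "m \<in> M" "m \<in> N" using dirM[OF that(1)] dirN[OF that(2)] nt by auto
      thus False using MNd by blast
    qed
    define \<alpha> where "\<alpha> = Inf ((\<lambda>x. u \<bullet> x) ` M)"
    define \<beta> where "\<beta> = Sup ((\<lambda>x. u \<bullet> x) ` N)"
    have bddM: "bdd_below ((\<lambda>x. u \<bullet> x) ` M)" using ord z0 by (intro bdd_belowI2[where m="u \<bullet> z0"]) blast
    have bddN: "bdd_above ((\<lambda>x. u \<bullet> x) ` N)" using ord x0 by (intro bdd_aboveI2[where M="u \<bullet> x0"]) blast
    have Mge: "\<alpha> \<le> u \<bullet> x" if "x \<in> M" for x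
      unfolding \<alpha>_def using bddM that by (auto intro: cInf_lower)
    have Nle: "u \<bullet> z \<le> \<beta>" if "z \<in> N" for z
      unfolding \<beta>_def using bddN that by (auto intro: cSup_upper)
    have zal: "u \<bullet> z \<le> \<alpha>" if "z \<in> N" for z
      unfolding \<alpha>_def using x0 ord that by (auto intro: cInf_greatest)
    have ba: "\<beta> \<le> \<alpha>" unfolding \<beta>_def using z0 zal by (auto intro: cSup_least)
    have "\<not> \<beta> < \<alpha>"
    proof
      assume lt: "\<beta> < \<alpha>"
      define c where "c = ((\<alpha> + \<beta>) / 2) *\<^sub>R u"
      define e where "e = (\<alpha> - \<beta>) / 2"
      have uu: "u \<bullet> u = 1" using nu by (simp add: norm_eq_1)
      have "ball c e \<subseteq> R"
      proof
        fix y assume "y \<in> ball c e"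
        hence "norm (y - c) < e" by (simp add: dist_norm norm_minus_commute)
        moreover have "\<bar>u \<bullet> (y - c)\<bar> \<le> norm (y - c)"
          using Cauchy_Schwarz_ineq2[of u "y - c"] nu by simp
        moreover have "u \<bullet> (y - c) = u \<bullet> y - (\<alpha> + \<beta>) / 2"
          using uu by (simp add: c_def inner_diff_right)
        ultimately have "\<bar>u \<bullet> y - (\<alpha> + \<beta>) / 2\<bar> < (\<alpha> - \<beta>) / 2" unfolding e_def by linarith
        hence yb: "\<beta> < u \<bullet> y" "u \<bullet> y < \<alpha>" by (auto simp: abs_less_iff field_simps)
        have "y \<notin> M" using Mge yb by force
        moreover have "y \<notin> N" using Nle yb by force
        moreover obtain A where "A \<in> P" "y \<in> A" using cU by blast
        ultimately show "y \<in> R" using labs lab by blast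
      qed
      moreover have "e > 0" using lt by (simp add: e_def)
      ultimately show False using ball_not_null Rnull by blast
    qed
    hence ab: "\<alpha> = \<beta>" using ba by simp
    have Mopen: "\<exists>e>0. ball x e \<subseteq> M" if xM: "x \<in> M" for x
    proof -
      obtain c r where cr: "x \<in> ball c r" "ball c r \<subseteq> M" using big[OF M xM, of 0] by blast
      obtain e where "e > 0" "ball x e \<subseteq> ball c r"
        using openE[OF open_ball \<open>x \<in> ball c r\<close>] by blast
      thus ?thesis using cr by blast
    qed
    have Nopen: "\<exists>e>0. ball x e \<subseteq> N" if xN: "x \<in> N" for x
    proof -
      obtain c r where cr: "x \<in> ball c r" "ball c r \<subseteq> N" using big[OF N xN, of 0] by blast
      obtain e where "e > 0" "ball x e \<subseteq> ball c r"
        using openE[OF open_ball \<open>x \<in> ball c r\<close>] by blast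
      thus ?thesis using cr by blast
    qed
    have uu: "u \<bullet> u = 1" using nu by (simp add: norm_eq_1)
    have Meq: "M = {y. u \<bullet> y > \<alpha>}"
    proof
      show "{y. u \<bullet> y > \<alpha>} \<subseteq> M"
      proof
        fix y assume "y \<in> {y. u \<bullet> y > \<alpha>}"
        then obtain x where "x \<in> M" "u \<bullet> x < u \<bullet> y"
          using cInf_lessD[of "(\<lambda>x. u \<bullet> x) ` M" "u \<bullet> y"] x0 unfolding \<alpha>_def by auto
        thus "y \<in> M" using dirM by blast
      qed
      show "M \<subseteq> {y. u \<bullet> y > \<alpha>}"
      proof
        fix x assume x: "x \<in> M"
        have "u \<bullet> x \<noteq> \<alpha>"
        proof
          assume eq: "u \<bullet> x = \<alpha>"
          obtain e where e: "e > 0" "ball x e \<subseteq> M" using Mopen[OF x] by blast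
          define y where "y = x - (e/2) *\<^sub>R u"
          have "dist x y < e" using e nu by (simp add: y_def dist_norm)
          hence yM: "y \<in> M" using e by auto
          have "u \<bullet> y < \<beta>" using eq ab uu e by (simp add: y_def inner_diff_right)
          then obtain z where "z \<in> N" "u \<bullet> y < u \<bullet> z"
            using less_cSupD[of "(\<lambda>x. u \<bullet> x) ` N" "u \<bullet> y"] z0 unfolding \<beta>_def by auto
          hence "y \<in> N" using dirN by blast
          thus False using yM MNd by blast
        qed
        thus "x \<in> {y. u \<bullet> y > \<alpha>}" using Mge[OF x] by simp
      qed
    qed
    have Neq: "N = {y. u \<bullet> y < \<alpha>}"
    proof
      show "{y. u \<bullet> y < \<alpha>} \<subseteq> N"
      proof
        fix y assume "y \<in> {y. u \<bullet> y < \<alpha>}"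
        then obtain z where "z \<in> N" "u \<bullet> y < u \<bullet> z"
          using less_cSupD[of "(\<lambda>x. u \<bullet> x) ` N" "u \<bullet> y"] z0 ab unfolding \<beta>_def by auto
        thus "y \<in> N" using dirN by blast
      qed
      show "N \<subseteq> {y. u \<bullet> y < \<alpha>}"
      proof
        fix x assume x: "x \<in> N"
        have "u \<bullet> x \<noteq> \<alpha>"
        proof
          assume eq: "u \<bullet> x = \<alpha>"
          obtain e where e: "e > 0" "ball x e \<subseteq> N" using Nopen[OF x] by blast
          define y where "y = x + (e/2) *\<^sub>R u"
          have "dist x y < e" using e nu by (simp add: y_def dist_norm)
          hence yN: "y \<in> N" using e by auto
          have "u \<bullet> y > \<alpha>" using eq uu e by (simp add: y_def inner_add_right)
          then obtain z where "z \<in> M" "u \<bullet> z < u \<bullet> y"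
            using cInf_lessD[of "(\<lambda>x. u \<bullet> x) ` M" "u \<bullet> y"] x0 unfolding \<alpha>_def by auto
          hence "y \<in> M" using dirM by blast
          thus False using yN MNd by blast
        qed
        thus "x \<in> {y. u \<bullet> y < \<alpha>}" using Nle[OF x] ab by simp
      qed
    qed
    have MR: "M \<inter> R = {}" "N \<inter> R = {}" using disj M N RP lab by blast+
    have Req: "R = {y. u \<bullet> y = \<alpha>}"
    proof
      show "R \<subseteq> {y. u \<bullet> y = \<alpha>}"
      proof
        fix y assume "y \<in> R"
        hence "y \<notin> M" "y \<notin> N" using MR by blast+
        thus "y \<in> {y. u \<bullet> y = \<alpha>}" using Meq Neq by force
      qed
      show "{y. u \<bullet> y = \<alpha>} \<subseteq> R"
      proof
        fix y assume "y \<in> {y. u \<bullet> y = \<alpha>}"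
        hence "y \<notin> M" "y \<notin> N" using Meq Neq by auto
        moreover obtain A where "A \<in> P" "y \<in> A" using cU by blast
        ultimately show "y \<in> R" using labs lab by blast
      qed
    qed
    have Peq: "P = {M, N, R}" using labs lab RP by blast
    show "refined_linear_classifier P R"
      unfolding refined_linear_classifier_def
    proof (intro exI conjI)
      show "u \<noteq> 0" using nu by auto
      show "R = {x. u \<bullet> x = \<alpha>}" by (rule Req)
      show "labels P R = {{x. u \<bullet> x < \<alpha>}, {x. u \<bullet> x > \<alpha>}}" using labs Meq Neq by blast
      show "P = {{x. u \<bullet> x < \<alpha>}, {x. u \<bullet> x > \<alpha>}, R}" using Peq Meq Neq by blast
    qed
  next
    assume "refined_linear_classifier P R"
    then obtain a b where a: "a \<noteq> 0" and Rd: "R = {x. a \<bullet> x = b}"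
      and labs: "labels P R = {{x. a \<bullet> x < b}, {x. a \<bullet> x > b}}"
      unfolding refined_linear_classifier_def by blast
    have "coverage P x = top" if xin: "x \<in> \<Union>(labels P R)" for x
    proof -
      obtain L where L: "L \<in> labels P R" "x \<in> L" using xin by blast
      have cell: "cell P x = L" using cell_eq[OF assms(1), of L x] L lab by blast
      show ?thesis
      proof (rule coverage_top)
        fix K :: real assume K: "K > 0"
        have "\<exists>c r. r > K \<and> x \<in> ball c r \<and> ball c r \<subseteq> L"
        proof (cases "L = {x. a \<bullet> x < b}")
          case True thus ?thesis using halfspace_ball[OF a _ K, of x] L by auto
        next
          case False
          hence Ld: "L = {y. (-a) \<bullet> y < -b}" using L labs by auto
          have "-a \<noteq> 0" using a by simp
          thus ?thesis using halfspace_ball[of "-a" x "-b" K] K L Ld by auto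
        qed
        thus "\<exists>c r. r > K \<and> anchor P x c r" using K cell unfolding anchor_def by force
      qed
    qed
    hence "(INF x\<in>\<Union>(labels P R). coverage P x) = top" by simp
    thus "infinite_pointwise_coverage P R"
      by (simp add: infinite_pointwise_coverage_def top_ereal_def)
  qed
qed

end
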